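(* Let $K\subset\mathbb R^n$ be compact and $B\subset\mathbb R^m$ a closed ball centred at the origin. Let $f,g:K\to B$ be continuous maps such that for every $x\in K$ there is $\lambda>0$ (depending on $x$) with $f(x)=\lambda\cdot g(x)$. If $g$ has convex fibres and $g(K)=B$, then $f(K)\supset\delta\cdot B$ for some $\delta>0$. *)

theory Defs
  imports "HOL-Analysis.Analysis"
begin

end

theory Submission
  imports Defs
begin

theorem mainTheorem15:
  fixes K :: "(real ^ 'n) set" and r :: real
    and f g :: "real ^ 'n \<Rightarrow> real ^ 'm"
  assumes "compact K"
    and "continuous_on K f" and "f ` K \<subseteq> cball 0 r"
    and "continuous_on K g" and "g ` K \<subseteq> cball 0 r"
    and "\<forall>x\<in>K. \<exists>c>0. f x = c *\<^sub>R g x"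
    and "\<forall>y. convex {x \<in> K. g x = y}"
    and "g ` K = cball 0 r"
  shows "\<exists>\<delta>>0. (\<lambda>y. \<delta> *\<^sub>R y) ` cball 0 r \<subseteq> f ` K"
proof (cases "r > 0")
  case False
  show ?thesis
  proof (intro exI[of _ 1] conjI)
    show "(\<lambda>y. 1 *\<^sub>R y) ` cball 0 r \<subseteq> f ` K"
    proof
      fix z :: "real^'m" assume "z \<in> (\<lambda>y. 1 *\<^sub>R y) ` cball 0 r"
      then have z: "z \<in> cball 0 r" by (metis (no_types, lifting) imageE scaleR_one)
      with False have "z = 0" by (auto simp: dist_norm) (smt (verit) norm_ge_zero norm_eq_zero)
      from z assms(8) obtain x where x: "x \<in> K" "g x = z" by (metis imageE)
      then show "z \<in> f ` K" using assms(6) \<open>z = 0\<close> by force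
    qed
  qed simp
next
  case rpos: True
  have fg: "\<And>x. x \<in> K \<Longrightarrow> \<exists>c>0. f x = c *\<^sub>R g x" using assms(6) by blast
  define Ks where "Ks = K \<inter> g -` sphere 0 r"
  have "closed Ks" unfolding Ks_def
    using continuous_closed_preimage[OF assms(4) compact_imp_closed[OF assms(1)]] by simp
  then have cKs: "compact Ks" unfolding Ks_def
    using assms(1) compact_Int_closed by (metis Int_absorb1 compact_imp_closed inf_le1 closed_Int_compact)
  obtain v :: "real ^ 'm" where v: "norm v = r" using vector_choose_size rpos by (metis less_imp_le)
  then have "v \<in> g ` K" using assms(8) by simp
  then have "Ks \<noteq> {}" unfolding Ks_def using v by auto
  have "continuous_on Ks (\<lambda>x. norm (f x))" unfolding Ks_def
    by (intro continuous_intros continuous_on_subset[OF assms(2)]) auto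
  then obtain xm where xm: "xm \<in> Ks" "\<And>x. x \<in> Ks \<Longrightarrow> norm (f xm) \<le> norm (f x)"
    using continuous_attains_inf[OF cKs \<open>Ks \<noteq> {}\<close>] by blast
  define d where "d = norm (f xm)"
  have "d > 0"
  proof -
    from xm(1) have "xm \<in> K" "norm (g xm) = r" unfolding Ks_def by auto
    with fg obtain c where "c > 0" "f xm = c *\<^sub>R g xm" by blast
    then show ?thesis using rpos \<open>norm (g xm) = r\<close> unfolding d_def by simp
  qed
  have closedmap: "\<And>C. closedin (top_of_set K) C \<Longrightarrow> closedin (top_of_set (cball 0 r)) (g ` C)"
  proof -
    fix C assume "closedin (top_of_set K) C"
    then have "compact C" using assms(1) closedin_compact by blast
    then have "compact (g ` C)"
      using compact_continuous_image continuous_on_subset[OF assms(4)]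
        \<open>closedin (top_of_set K) C\<close> closedin_imp_subset by metis
    moreover have "g ` C \<subseteq> cball 0 r" using assms(8) \<open>closedin (top_of_set K) C\<close> closedin_imp_subset
      by blast
    ultimately show "closedin (top_of_set (cball 0 r)) (g ` C)"
      by (simp add: closed_subset compact_imp_closed)
  qed
  have connfib: "\<And>y. y \<in> cball 0 r \<Longrightarrow> connected (K \<inter> g -` {y})"
  proof -
    fix y :: "real^'m"
    have "K \<inter> g -` {y} = {x \<in> K. g x = y}" by auto
    then show "connected (K \<inter> g -` {y})" using assms(7) convex_connected by metis
  qed
  obtain x0 where x0: "x0 \<in> K" "g x0 = 0" using assms(8) rpos
    by (metis centre_in_cball imageE less_imp_le)
  have fx0: "f x0 = 0" using fg[OF x0(1)] x0(2) by auto
  show ?thesis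
  proof (intro exI[of _ "d / r"] conjI)
    show "d / r > 0" using \<open>d > 0\<close> rpos by simp
    show "(\<lambda>y. (d / r) *\<^sub>R y) ` cball 0 r \<subseteq> f ` K"
    proof
      fix z :: "real^'m" assume "z \<in> (\<lambda>y. (d / r) *\<^sub>R y) ` cball 0 r"
      then obtain y where y: "y \<in> cball 0 r" "z = (d / r) *\<^sub>R y" by auto
      show "z \<in> f ` K"
      proof (cases "y = 0")
        case True
        then show ?thesis using y x0 fx0 by (metis image_eqI scaleR_zero_right)
      next
        case False
        define u where "u = y /\<^sub>R norm y"
        have nu: "norm u = 1" using False unfolding u_def by simp
        have uu: "u \<bullet> u = 1" using nu by (simp add: dot_square_norm)
        define C where "C = closed_segment 0 (r *\<^sub>R u)"
        have "connected C" unfolding C_def by simp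
        have "C \<subseteq> cball 0 r" unfolding C_def
          using rpos nu by (intro closed_segment_subset) (auto simp: dist_norm)
        define A where "A = K \<inter> g -` C"
        have connA: "connected A" unfolding A_def
          by (rule connected_closed_monotone_preimage[OF assms(4) assms(8) closedmap connfib
                \<open>connected C\<close> \<open>C \<subseteq> cball 0 r\<close>])
        have contA: "continuous_on A (\<lambda>x. f x \<bullet> u)" unfolding A_def
          by (intro continuous_intros continuous_on_subset[OF assms(2)]) auto
        have conn2: "connected ((\<lambda>x. f x \<bullet> u) ` A)"
          using connected_continuous_image[OF contA connA] .
        have x0A: "x0 \<in> A" unfolding A_def C_def using x0 by auto
        have "r *\<^sub>R u \<in> cball 0 r" using nu rpos by (simp add: dist_norm)
        then obtain x1 where x1: "x1 \<in> K" "g x1 = r *\<^sub>R u" using assms(8) by (metis imageE)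
        have x1A: "x1 \<in> A" unfolding A_def C_def using x1 by auto
        have "x1 \<in> Ks" unfolding Ks_def using x1 nu rpos by simp
        then have dle: "d \<le> norm (f x1)" using xm(2) d_def by simp
        from fg[OF x1(1)] obtain c1 where c1: "c1 > 0" "f x1 = c1 *\<^sub>R g x1" by blast
        have "f x1 \<bullet> u = c1 * r" using c1 x1(2) uu by simp
        moreover have "norm (f x1) = c1 * r" using c1 x1(2) nu rpos by simp
        ultimately have d1: "d \<le> f x1 \<bullet> u" using dle by simp
        have sfx: "\<And>x. x \<in> A \<Longrightarrow> f x = (f x \<bullet> u) *\<^sub>R u"
        proof -
          fix x assume "x \<in> A"
          then have xK: "x \<in> K" and "g x \<in> C" unfolding A_def by auto
          then obtain t where "g x = t *\<^sub>R (r *\<^sub>R u)" unfolding C_def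
            by (auto simp: closed_segment_def)
          moreover obtain c where "f x = c *\<^sub>R g x" using fg[OF xK] by blast
          ultimately have "f x = (c * t * r) *\<^sub>R u" by simp
          then show "f x = (f x \<bullet> u) *\<^sub>R u" using uu by simp
        qed
        define s where "s = (d / r) * norm y"
        have "s \<ge> 0" using \<open>d > 0\<close> rpos unfolding s_def by simp
        have "norm y \<le> r" using y(1) by (simp add: dist_norm)
        then have "s \<le> d" unfolding s_def using \<open>d > 0\<close> rpos
          by (simp add: field_simps mult_left_mono)
        have "f x0 \<bullet> u = 0" using fx0 by simp
        then have "s \<in> {f x0 \<bullet> u .. f x1 \<bullet> u}" using \<open>s \<ge> 0\<close> \<open>s \<le> d\<close> d1 by simp
        then have "s \<in> (\<lambda>x. f x \<bullet> u) ` A"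
          using connected_contains_Icc[OF conn2] x0A x1A by blast
        then obtain x where x: "x \<in> A" "f x \<bullet> u = s" by blast
        have "f x = s *\<^sub>R u" using sfx[OF x(1)] x(2) by simp
        also have "\<dots> = z" using y(2) False unfolding s_def u_def by simp
        finally show ?thesis using x(1) unfolding A_def by auto
      qed
    qed
  qed
qed

end
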